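(* Let $d,n,k\ge 1$ be integers and let $\mathcal{L}_{\leq d}(n,k)$ be the set of lonesum $0$-$1$ matrices with $n$ rows and $k$ columns having no all-zero row and no all-zero column, in which at most $d$ columns are of the same type and at most $d$ rows are of the same type. Then $\mathcal{L}_{\leq d}(n,k)$ is non-empty if and only if $\lceil n/d\rceil\leq k\leq nd$; i.e. $|\mathcal{L}_{\leq d}(n,k)|=0$ if $k<\lceil n/d\rceil$ or $k>nd$.
   Context: A $0$-$1$ matrix is lonesum if it is uniquely determined by its row sum vector and column sum vector; equivalently, it contains no $2\times 2$ submatrix equal to $\begin{pmatrix}1&0\\0&1\end{pmatrix}$ or $\begin{pmatrix}0&1\\1&0\end{pmatrix}$. Two rows (resp. columns) are of the same type iff they are identical vectors. *)

theory Defs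
  imports Complex_Main
begin

text \<open>An n x k 0-1 matrix is represented as a function M :: nat => nat => nat,
  with rows indexed by {0..<n}, columns by {0..<k}; entries outside the index
  range are required to be 0 (so that matrices are canonically represented).\<close>

definition binmat :: "nat \<Rightarrow> nat \<Rightarrow> (nat \<Rightarrow> nat \<Rightarrow> nat) \<Rightarrow> bool" where
  "binmat n k M \<longleftrightarrow> (\<forall>i j. M i j \<in> {0, 1}) \<and>
     (\<forall>i j. \<not> (i < n \<and> j < k) \<longrightarrow> M i j = 0)"

definition row_sum :: "nat \<Rightarrow> (nat \<Rightarrow> nat \<Rightarrow> nat) \<Rightarrow> nat \<Rightarrow> nat" where
  "row_sum k M i = (\<Sum>j<k. M i j)"

definition col_sum :: "nat \<Rightarrow> (nat \<Rightarrow> nat \<Rightarrow> nat) \<Rightarrow> nat \<Rightarrow> nat" where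
  "col_sum n M j = (\<Sum>i<n. M i j)"

definition lonesum :: "nat \<Rightarrow> nat \<Rightarrow> (nat \<Rightarrow> nat \<Rightarrow> nat) \<Rightarrow> bool" where
  "lonesum n k M \<longleftrightarrow> binmat n k M \<and>
     (\<forall>M'. binmat n k M' \<and> (\<forall>i<n. row_sum k M' i = row_sum k M i)
            \<and> (\<forall>j<k. col_sum n M' j = col_sum n M j) \<longrightarrow> M' = M)"

definition L_le :: "nat \<Rightarrow> nat \<Rightarrow> nat \<Rightarrow> (nat \<Rightarrow> nat \<Rightarrow> nat) set" where
  "L_le d n k = {M. lonesum n k M
     \<and> (\<forall>i<n. \<exists>j<k. M i j \<noteq> 0)
     \<and> (\<forall>j<k. \<exists>i<n. M i j \<noteq> 0)
     \<and> (\<forall>j<k. card {j'. j' < k \<and> (\<forall>i<n. M i j' = M i j)} \<le> d)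
     \<and> (\<forall>i<n. card {i'. i' < n \<and> (\<forall>j<k. M i' j = M i j)} \<le> d)}"

end

theory Submission
  imports Defs
begin

lemma swap_sum:
  fixes f g :: "nat \<Rightarrow> nat"
  assumes "finite A" "x \<in> A" "y \<in> A" "x \<noteq> y" "f x + f y = g x + g y"
    "\<And>z. z \<in> A \<Longrightarrow> z \<noteq> x \<Longrightarrow> z \<noteq> y \<Longrightarrow> f z = g z"
  shows "sum f A = sum g A"
proof -
  have "sum f A = f x + (f y + sum f (A - {x} - {y}))"
    using assms by (simp add: sum.remove[of A x] sum.remove[of "A - {x}" y])
  moreover have "sum g A = g x + (g y + sum g (A - {x} - {y}))"
    using assms by (simp add: sum.remove[of A x] sum.remove[of "A - {x}" y])
  moreover have "sum f (A - {x} - {y}) = sum g (A - {x} - {y})"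
    using assms(6) by (intro sum.cong) auto
  ultimately show ?thesis using assms(5) by simp
qed

lemma no_pattern:
  assumes L: "lonesum n k M" and i: "i < n" "i' < n" and j: "j1 < k" "j2 < k"
    and v: "M i j1 = 1" "M i' j1 = 0" "M i j2 = 0" "M i' j2 = 1"
  shows False
proof -
  have ii: "i \<noteq> i'" using v by auto
  have jj: "j1 \<noteq> j2" using v by auto
  have bM: "binmat n k M" using L unfolding lonesum_def by simp
  define M' where "M' a b = (if (a = i \<and> b = j1) \<or> (a = i' \<and> b = j2) then 0
     else if (a = i \<and> b = j2) \<or> (a = i' \<and> b = j1) then 1 else M a b)" for a b
  have bM': "binmat n k M'" using bM i j unfolding binmat_def M'_def by auto
  have rs: "row_sum k M' a = row_sum k M a" if "a < n" for a
  proof (cases "a = i \<or> a = i'")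
    case True
    then show ?thesis unfolding row_sum_def
      using ii jj v j by (intro swap_sum[of "{..<k}" j1 j2]) (auto simp: M'_def)
  next
    case False
    then show ?thesis unfolding row_sum_def M'_def by simp
  qed
  have cs: "col_sum n M' b = col_sum n M b" if "b < k" for b
  proof (cases "b = j1 \<or> b = j2")
    case True
    then show ?thesis unfolding col_sum_def
      using ii jj v i by (intro swap_sum[of "{..<n}" i i']) (auto simp: M'_def)
  next
    case False
    then show ?thesis unfolding col_sum_def M'_def by simp
  qed
  have "M' = M" using L bM' rs cs unfolding lonesum_def by blast
  moreover have "M' i j1 \<noteq> M i j1" using v unfolding M'_def by simp
  ultimately show False by simp
qed

lemma rows_eq_aux:
  assumes L: "lonesum n k M" and i: "i < n" "i' < n"
    and s: "row_sum k M i = row_sum k M i'" and j: "j < k" "M i j = 1" "M i' j = 0"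
  shows False
proof -
  have bM: "binmat n k M" using L unfolding lonesum_def by simp
  have b01: "M a b = 0 \<or> M a b = 1" for a b using bM unfolding binmat_def by auto
  show False
  proof (cases "\<exists>j2<k. M i j2 = 0 \<and> M i' j2 = 1")
    case True
    then obtain j2 where "j2 < k" "M i j2 = 0" "M i' j2 = 1" by blast
    then show False using no_pattern[OF L i j(1) _ j(2,3)] by blast
  next
    case False
    have "(\<Sum>b<k. M i' b) < (\<Sum>b<k. M i b)"
    proof (rule sum_strict_mono_ex1)
      show "\<forall>x\<in>{..<k}. M i' x \<le> M i x"
        using False b01 by (metis le_refl lessThan_iff zero_le)
      show "\<exists>a\<in>{..<k}. M i' a < M i a" using j by (intro bexI[of _ j]) auto
    qed simp
    then show False using s unfolding row_sum_def by simp
  qed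
qed

lemma rows_eq:
  assumes L: "lonesum n k M" and i: "i < n" "i' < n"
    and s: "row_sum k M i = row_sum k M i'"
  shows "\<forall>j<k. M i' j = M i j"
proof (rule ccontr)
  assume "\<not> ?thesis"
  then obtain j where j: "j < k" "M i' j \<noteq> M i j" by blast
  have bM: "binmat n k M" using L unfolding lonesum_def by simp
  have b01: "M a b = 0 \<or> M a b = 1" for a b using bM unfolding binmat_def by auto
  from j b01[of i j] b01[of i' j] have "(M i j = 1 \<and> M i' j = 0) \<or> (M i' j = 1 \<and> M i j = 0)"
    by auto
  then show False
    using rows_eq_aux[OF L i s j(1)] rows_eq_aux[OF L i(2) i(1) s[symmetric] j(1)] by blast
qed

lemma L_bound:
  assumes M: "M \<in> L_le d n k"
  shows "n \<le> k * d"
proof -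
  have L: "lonesum n k M" and nz: "\<forall>i<n. \<exists>j<k. M i j \<noteq> 0"
    and rc: "\<forall>i<n. card {i'. i' < n \<and> (\<forall>j<k. M i' j = M i j)} \<le> d"
    using M unfolding L_le_def by auto
  have bM: "binmat n k M" using L unfolding lonesum_def by simp
  have b01: "M a b = 0 \<or> M a b = 1" for a b using bM unfolding binmat_def by auto
  define S where "S s = {i. i < n \<and> row_sum k M i = s}" for s
  have sub: "{..<n} \<subseteq> (\<Union>s\<in>{1..k}. S s)"
  proof
    fix i assume "i \<in> {..<n}"
    then have i: "i < n" by simp
    then obtain j where j: "j < k" "M i j \<noteq> 0" using nz by blast
    have "M i j \<le> row_sum k M i" unfolding row_sum_def
      using j by (intro member_le_sum) auto
    then have "1 \<le> row_sum k M i" using j b01[of i j] by auto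
    moreover have "row_sum k M i \<le> (\<Sum>b<k. (1::nat))" unfolding row_sum_def
    proof (rule sum_mono)
      fix b show "M i b \<le> 1" using b01[of i b] by auto
    qed
    ultimately show "i \<in> (\<Union>s\<in>{1..k}. S s)" using i unfolding S_def by auto
  qed
  have cS: "card (S s) \<le> d" for s
  proof (cases "S s = {}")
    case True then show ?thesis by simp
  next
    case False
    then obtain i0 where i0: "i0 \<in> S s" by blast
    have "S s \<subseteq> {i'. i' < n \<and> (\<forall>j<k. M i' j = M i0 j)}"
    proof
      fix i' assume "i' \<in> S s"
      then have "i' < n" "row_sum k M i' = s" unfolding S_def by auto
      moreover have "i0 < n" "row_sum k M i0 = s" using i0 unfolding S_def by auto
      ultimately show "i' \<in> {i'. i' < n \<and> (\<forall>j<k. M i' j = M i0 j)}"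
        using rows_eq[OF L, of i0 i'] by simp
    qed
    then have "card (S s) \<le> card {i'. i' < n \<and> (\<forall>j<k. M i' j = M i0 j)}"
      by (intro card_mono) auto
    also have "\<dots> \<le> d" using rc i0 unfolding S_def by auto
    finally show ?thesis .
  qed
  have "n = card {..<n}" by simp
  also have "\<dots> \<le> card (\<Union>s\<in>{1..k}. S s)"
  proof (rule card_mono)
    show "finite (\<Union>s\<in>{1..k}. S s)" unfolding S_def by auto
  qed (rule sub)
  also have "\<dots> \<le> (\<Sum>s\<in>{1..k}. card (S s))" by (rule card_UN_le) simp
  also have "\<dots> \<le> (\<Sum>s\<in>{1..k}. d)" using cS by (intro sum_mono) auto
  finally show ?thesis by simp
qed

lemma L_transpose:
  assumes M: "M \<in> L_le d n k"
  shows "(\<lambda>i j. M j i) \<in> L_le d k n"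
proof -
  have L: "lonesum n k M" using M unfolding L_le_def by auto
  have bM: "binmat n k M" using L unfolding lonesum_def by simp
  have LT: "lonesum k n (\<lambda>i j. M j i)"
    unfolding lonesum_def
  proof (intro conjI allI impI)
    show "binmat k n (\<lambda>i j. M j i)" using bM unfolding binmat_def by auto
    fix M' assume H: "binmat k n M' \<and> (\<forall>i<k. row_sum n M' i = row_sum n (\<lambda>i j. M j i) i)
       \<and> (\<forall>j<n. col_sum k M' j = col_sum k (\<lambda>i j. M j i) j)"
    have "binmat n k (\<lambda>a b. M' b a)" using H unfolding binmat_def by auto
    moreover have "\<forall>i<n. row_sum k (\<lambda>a b. M' b a) i = row_sum k M i"
      using H unfolding row_sum_def col_sum_def by auto
    moreover have "\<forall>j<k. col_sum n (\<lambda>a b. M' b a) j = col_sum n M j"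
      using H unfolding row_sum_def col_sum_def by auto
    ultimately have "(\<lambda>a b. M' b a) = M" using L unfolding lonesum_def by blast
    then show "M' = (\<lambda>i j. M j i)" by (metis)
  qed
  show ?thesis using M LT unfolding L_le_def by auto
qed

lemma ferrers_lonesum:
  assumes F: "\<And>i j. F i j = (if i < n \<and> j < k \<and> j < r i then 1 else (0::nat))"
  shows "lonesum n k F"
proof -
  have bF: "binmat n k F" unfolding binmat_def using F by auto
  show ?thesis unfolding lonesum_def
  proof (intro conjI allI impI bF)
    fix M' assume H: "binmat n k M' \<and> (\<forall>i<n. row_sum k M' i = row_sum k F i)
       \<and> (\<forall>j<k. col_sum n M' j = col_sum n F j)"
    then have bM: "binmat n k M'"
      and rs: "\<And>i. i < n \<Longrightarrow> (\<Sum>j<k. M' i j) = (\<Sum>j<k. F i j)"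
      and cs: "\<And>j. j < k \<Longrightarrow> (\<Sum>i<n. M' i j) = (\<Sum>i<n. F i j)"
      by (auto simp: row_sum_def col_sum_def)
    have M01: "M' i j = 0 \<or> M' i j = 1" for i j using bM unfolding binmat_def by auto
    define D where "D i j = int (F i j) - int (M' i j)" for i j
    define T where "T i j = D i j * (2 * int j - 2 * int (r i) + 1)" for i j
    have Tle: "T i j \<le> 0" if "i < n" "j < k" for i j
      using M01[of i j] that unfolding T_def D_def F by (cases "j < r i") auto
    have Teq: "M' i j = F i j" if "i < n" "j < k" "T i j = 0" for i j
      using M01[of i j] that unfolding T_def D_def F by (cases "j < r i") auto
    have rowD: "(\<Sum>j<k. D i j) = 0" if "i < n" for i
      using arg_cong[OF rs[OF that], of int] by (simp add: D_def sum_subtractf of_nat_sum)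
    have colD: "(\<Sum>i<n. D i j) = 0" if "j < k" for j
      using arg_cong[OF cs[OF that], of int] by (simp add: D_def sum_subtractf of_nat_sum)
    have Tsplit: "T i j = 2 * int j * D i j - (2 * int (r i) - 1) * D i j" for i j
      unfolding T_def by (simp add: algebra_simps)
    have "(\<Sum>i<n. \<Sum>j<k. T i j) = (\<Sum>i<n. \<Sum>j<k. 2 * int j * D i j)
       - (\<Sum>i<n. (2 * int (r i) - 1) * (\<Sum>j<k. D i j))"
      unfolding Tsplit by (simp add: sum_subtractf sum_distrib_left)
    also have "(\<Sum>i<n. \<Sum>j<k. 2 * int j * D i j) = (\<Sum>j<k. 2 * int j * (\<Sum>i<n. D i j))"
      by (subst sum.swap) (simp add: sum_distrib_left)
    also have "\<dots> = 0" using colD by simp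
    also have "(\<Sum>i<n. (2 * int (r i) - 1) * (\<Sum>j<k. D i j)) = 0" using rowD by simp
    finally have tot: "(\<Sum>i<n. \<Sum>j<k. T i j) = 0" by simp
    have rowT: "(\<Sum>j<k. T i j) = 0" if "i < n" for i
    proof -
      have "(\<Sum>i<n. - (\<Sum>j<k. T i j)) = 0" using tot by (simp add: sum_negf)
      moreover have "\<forall>i\<in>{..<n}. 0 \<le> - (\<Sum>j<k. T i j)"
        using Tle by (auto intro: sum_nonpos)
      ultimately show ?thesis using that sum_nonneg_eq_0_iff[of "{..<n}" "\<lambda>i. - (\<Sum>j<k. T i j)"] by auto
    qed
    have Tz: "T i j = 0" if "i < n" "j < k" for i j
    proof -
      have "(\<Sum>j<k. - T i j) = 0" using rowT[OF that(1)] by (simp add: sum_negf)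
      moreover have "\<forall>j\<in>{..<k}. 0 \<le> - T i j" using Tle that(1) by auto
      ultimately show ?thesis using that sum_nonneg_eq_0_iff[of "{..<k}" "\<lambda>j. - T i j"] by auto
    qed
    show "M' = F"
    proof (intro ext)
      fix i j
      show "M' i j = F i j"
      proof (cases "i < n \<and> j < k")
        case True then show ?thesis using Teq Tz by auto
      next
        case False then show ?thesis using bM F unfolding binmat_def by auto
      qed
    qed
  qed
qed

lemma construct:
  assumes "1 \<le> k" "k \<le> n" "n \<le> k * d"
  shows "L_le d n k \<noteq> {}"
proof -
  define F where "F i j = (if i < n \<and> j < k \<and> j < Suc (i mod k) then 1 else (0::nat))" for i j
  have L: "lonesum n k F" by (rule ferrers_lonesum[of F n k "\<lambda>i. Suc (i mod k)"]) (simp add: F_def)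
  have r1: "\<forall>i<n. \<exists>j<k. F i j \<noteq> 0" using assms unfolding F_def by (auto intro!: exI[of _ 0])
  have c1: "\<forall>j<k. \<exists>i<n. F i j \<noteq> 0"
  proof (intro allI impI)
    fix j assume "j < k"
    then show "\<exists>i<n. F i j \<noteq> 0" using assms by (intro exI[of _ j]) (auto simp: F_def)
  qed
  have c2: "\<forall>j<k. card {j'. j' < k \<and> (\<forall>i<n. F i j' = F i j)} \<le> d"
  proof (intro allI impI)
    fix j assume j: "j < k"
    have "{j'. j' < k \<and> (\<forall>i<n. F i j' = F i j)} \<subseteq> {j}"
    proof
      fix j' assume "j' \<in> {j'. j' < k \<and> (\<forall>i<n. F i j' = F i j)}"
      then have j': "j' < k" "\<forall>i<n. F i j' = F i j" by auto
      have "F j j' = F j j" using j' j assms by auto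
      then have "j' \<le> j" using j j' assms by (auto simp: F_def split: if_splits)
      moreover have "F j' j' = F j' j" using j' j assms by auto
      then have "j \<le> j'" using j j' assms by (auto simp: F_def split: if_splits)
      ultimately show "j' \<in> {j}" by simp
    qed
    then have "card {j'. j' < k \<and> (\<forall>i<n. F i j' = F i j)} \<le> card {j}"
      by (intro card_mono) auto
    moreover have "d \<ge> 1" using assms by (cases d) auto
    ultimately show "card {j'. j' < k \<and> (\<forall>i<n. F i j' = F i j)} \<le> d" by auto
  qed
  have r2: "\<forall>i<n. card {i'. i' < n \<and> (\<forall>j<k. F i' j = F i j)} \<le> d"
  proof (intro allI impI)
    fix i assume i: "i < n"
    have kpos: "0 < k" using assms by simp
    have "{i'. i' < n \<and> (\<forall>j<k. F i' j = F i j)} \<subseteq> {i'. i' < n \<and> i' mod k = i mod k}"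
    proof
      fix i' assume "i' \<in> {i'. i' < n \<and> (\<forall>j<k. F i' j = F i j)}"
      then have i': "i' < n" "\<forall>j<k. F i' j = F i j" by auto
      have "F i' (i mod k) = F i (i mod k)" using i' kpos by auto
      then have "i mod k \<le> i' mod k" using i i'(1) kpos mod_less_divisor[OF kpos, of i] mod_less_divisor[OF kpos, of i'] by (auto simp: F_def split: if_splits)
      moreover have "F i' (i' mod k) = F i (i' mod k)" using i' kpos by auto
      then have "i' mod k \<le> i mod k" using i i'(1) kpos mod_less_divisor[OF kpos, of i] mod_less_divisor[OF kpos, of i'] by (auto simp: F_def split: if_splits)
      ultimately show "i' \<in> {i'. i' < n \<and> i' mod k = i mod k}" using i' by simp
    qed
    then have "card {i'. i' < n \<and> (\<forall>j<k. F i' j = F i j)} \<le> card {i'. i' < n \<and> i' mod k = i mod k}"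
      by (intro card_mono) auto
    also have "\<dots> \<le> card {..<d}"
    proof (rule card_inj_on_le[where f = "\<lambda>x. x div k"])
      show "inj_on (\<lambda>x. x div k) {i'. i' < n \<and> i' mod k = i mod k}"
        by (intro inj_onI) (metis (mono_tags, lifting) div_mult_mod_eq mem_Collect_eq)
      show "(\<lambda>x. x div k) ` {i'. i' < n \<and> i' mod k = i mod k} \<subseteq> {..<d}"
      proof
        fix y assume "y \<in> (\<lambda>x. x div k) ` {i'. i' < n \<and> i' mod k = i mod k}"
        then obtain x where "x < n" "y = x div k" by auto
        then have "x < d * k" using assms by (simp add: mult.commute)
        then show "y \<in> {..<d}" using \<open>y = x div k\<close> by (simp add: less_mult_imp_div_less)
      qed
    qed simp
    finally show "card {i'. i' < n \<and> (\<forall>j<k. F i' j = F i j)} \<le> d" by simp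
  qed
  have "F \<in> L_le d n k" unfolding L_le_def using L r1 c1 c2 r2 by blast
  then show ?thesis by blast
qed

theorem mainTheorem5:
  fixes d n k :: nat
  assumes "d \<ge> 1" and "n \<ge> 1" and "k \<ge> 1"
  shows "L_le d n k \<noteq> {} \<longleftrightarrow> \<lceil>real n / real d\<rceil> \<le> int k \<and> k \<le> n * d"
proof -
  have ceq: "\<lceil>real n / real d\<rceil> \<le> int k \<longleftrightarrow> n \<le> k * d"
  proof -
    have "\<lceil>real n / real d\<rceil> \<le> int k \<longleftrightarrow> real n / real d \<le> real k"
      by (simp add: ceiling_le_iff)
    also have "\<dots> \<longleftrightarrow> real n \<le> real k * real d" using assms(1) by (simp add: pos_divide_le_eq)
    also have "\<dots> \<longleftrightarrow> n \<le> k * d" by (metis of_nat_le_iff of_nat_mult)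
    finally show ?thesis .
  qed
  show ?thesis
  proof
    assume "L_le d n k \<noteq> {}"
    then obtain M where M: "M \<in> L_le d n k" by blast
    have "n \<le> k * d" using L_bound[OF M] .
    moreover have "k \<le> n * d" using L_bound[OF L_transpose[OF M]] .
    ultimately show "\<lceil>real n / real d\<rceil> \<le> int k \<and> k \<le> n * d" using ceq by simp
  next
    assume "\<lceil>real n / real d\<rceil> \<le> int k \<and> k \<le> n * d"
    then have a: "n \<le> k * d" "k \<le> n * d" using ceq by auto
    show "L_le d n k \<noteq> {}"
    proof (cases "k \<le> n")
      case True then show ?thesis using construct assms a by blast
    next
      case False
      then have "L_le d k n \<noteq> {}" using construct[of n k d] assms a by simp
      then obtain M where "M \<in> L_le d k n" by blast
      then have "(\<lambda>i j. M j i) \<in> L_le d n k" by (rule L_transpose)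
      then show ?thesis by blast
    qed
  qed
qed

end
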